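(* Let $p\ge 2$, let $F$ be a distribution on $\mathbb{R}^p$, let $X\sim F$, let $X_1,X_2,\ldots$ be independent random vectors with distribution $F$, let $\mathbb{X}_n=(X_1,\ldots,X_n)^T$, and let $t\in\mathbb{R}^p$. Suppose there is an $\alpha\ge 0$ such that (I) $E\,|X-t|^{-1/(1+\alpha)}<\infty$, and (II) there is a sequence $(t_n)_{n\in\mathbb{N}}$ of random $p$-vectors (defined on the same probability space as the $X_i$) satisfying $n^\alpha|t_n-t|\le T_n$ almost surely, where $(T_n)_{n\in\mathbb{N}}$ is a sequence of random variables that converges almost surely (if $\alpha>0$) or converges almost surely to $0$ (if $\alpha=0$). Then $S_n(\mathbb{X}_n,t_n)\to S(F,t)$ almost surely as $n\to\infty$. Moreover, if condition (I) holds and, instead of (II), $(t_n)$ is a sequence of random $p$-vectors such that $n^\alpha|t_n-t|$ is bounded in probability (if $\alpha>0$) or converges in probability to $0$ (if $\alpha=0$), then $S_n(\mathbb{X}_n,t_n)\to S(F,t)$ in probability.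
   Context: $|\cdot|$ denotes the Euclidean norm on $\mathbb{R}^p$. The spatial sign of $x\in\mathbb{R}^p$ is $s(x)=x/|x|$ for $x\neq 0$ and $s(0)=0$. For a distribution $F$ on $\mathbb{R}^p$ with $X\sim F$ and $t\in\mathbb{R}^p$, the spatial sign covariance matrix is $S(F,t)=E\{s(X-t)s(X-t)^T\}$. For the sample $\mathbb{X}_n=(X_1,\ldots,X_n)^T$ and a (possibly random) $u\in\mathbb{R}^p$, $S_n(\mathbb{X}_n,u)=\frac1n\sum_{i=1}^n s(X_i-u)s(X_i-u)^T$. *)

theory Defs
  imports "HOL-Probability.Probability"
begin

text \<open>Spatial sign: s(x) = x/|x| for x \<noteq> 0, s(0) = 0. This is exactly the library's sgn
  on a real normed vector space (sgn x = x /R norm x, sgn 0 = 0).\<close>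
definition spatial_sign :: "real^'p \<Rightarrow> real^'p" where
  "spatial_sign x = (if x = 0 then 0 else x /\<^sub>R norm x)"

definition outer :: "real^'p \<Rightarrow> real^'p \<Rightarrow> real^'p^'p" where
  "outer v w = (\<chi> i j. v $ i * w $ j)"

definition SSCM :: "(real^'p) measure \<Rightarrow> real^'p \<Rightarrow> real^'p^'p" where
  "SSCM F t = (\<integral>x. outer (spatial_sign (x - t)) (spatial_sign (x - t)) \<partial>F)"

text \<open>Empirical SSCM S_n(X_n,u) = (1/n) sum_{i=1}^n s(X_i-u) s(X_i-u)^T;
  the sample X_1,...,X_n is represented by X 0, ..., X (n-1).\<close>
definition SSCM_n :: "(nat \<Rightarrow> real^'p) \<Rightarrow> nat \<Rightarrow> real^'p \<Rightarrow> real^'p^'p" where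
  "SSCM_n X n u = (1 / real n) *\<^sub>R (\<Sum>i<n. outer (spatial_sign (X i - u)) (spatial_sign (X i - u)))"

definition conv_in_prob :: "'a measure \<Rightarrow> (nat \<Rightarrow> 'a \<Rightarrow> 'b::metric_space) \<Rightarrow> ('a \<Rightarrow> 'b) \<Rightarrow> bool" where
  "conv_in_prob M Y L \<longleftrightarrow>
     (\<forall>e>0. (\<lambda>n. measure M {\<omega> \<in> space M. dist (Y n \<omega>) (L \<omega>) > e}) \<longlonglongrightarrow> 0)"

definition bounded_in_prob :: "'a measure \<Rightarrow> (nat \<Rightarrow> 'a \<Rightarrow> real) \<Rightarrow> bool" where
  "bounded_in_prob M Y \<longleftrightarrow>
     (\<forall>e>0. \<exists>K. \<forall>n. measure M {\<omega> \<in> space M. \<bar>Y n \<omega>\<bar> > K} \<le> e)"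

end

theory Submission
  imports Defs
begin


lemma slln_bounded:
  fixes M :: "'a measure" and Z :: "nat \<Rightarrow> 'a \<Rightarrow> real" and B :: real
  assumes P: "prob_space M" and ind: "prob_space.indep_vars M (\<lambda>_. borel) Z UNIV"
    and dZ: "\<And>i. distr M borel (Z i) = distr M borel (Z 0)"
    and bd: "\<And>i \<omega>. \<omega> \<in> space M \<Longrightarrow> \<bar>Z i \<omega>\<bar> \<le> B"
  shows "AE \<omega> in M. (\<lambda>n. (\<Sum>i<n. Z i \<omega>) / real n) \<longlonglongrightarrow> prob_space.expectation M (Z 0)"
proof -
  interpret prob_space M by (rule P)
  define \<mu> where "\<mu> = expectation (Z 0)"
  have meas[measurable]: "\<And>i. Z i \<in> borel_measurable M"
    using ind unfolding indep_vars_def by auto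
  obtain \<omega>0 where "\<omega>0 \<in> space M" using not_empty by auto
  hence B0: "B \<ge> 0" using bd[of \<omega>0 0] by auto
  have key: "AE \<omega> in M. eventually (\<lambda>n. \<bar>(\<Sum>i<Suc n. Z i \<omega>) / real (Suc n) - \<mu>\<bar> < e) sequentially"
    if e: "e > 0" for e
  proof -
    define A where "A n = {\<omega> \<in> space M. \<bar>(\<Sum>i<Suc n. Z i \<omega>) / real (Suc n) - \<mu>\<bar> \<ge> e}" for n
    define c where "c = 2 * e\<^sup>2 / ((B+1) - (-B-1))\<^sup>2"
    have c: "c > 0" using e B0 by (auto simp: c_def)
    have Pb: "measure M (A n) \<le> 2 * exp (-c) ^ Suc n" for n
    proof -
      interpret H: Hoeffding_ineq_iid M "{..<Suc n}" Z "Z 0" "-B-1" "B+1" \<mu>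
      proof unfold_locales
        show "AE x in M. Z 0 x \<in> {- B - 1..B + 1}"
        proof (intro AE_I2)
          fix x assume "x \<in> space M"
          then show "Z 0 x \<in> {- B - 1..B + 1}" using bd[of x 0] by auto
        qed
      next
        show "indep_vars (\<lambda>_. borel) Z {..<Suc n}" by (rule indep_vars_subset[OF ind]) auto
      next
        show "\<mu> \<equiv> expectation (Z 0)" by (simp add: \<mu>_def)
      next
        show "finite {..<Suc n}" by simp
      next
        show "random_variable borel (Z 0)" by (rule meas)
      next
        fix i show "distr M borel (Z i) = distr M borel (Z 0)" by (rule dZ)
      qed
      have ne: "{..<Suc n} \<noteq> {}" by auto
      have "measure M (A n) \<le> 2 * exp (-2 * real (card {..<Suc n}) * e\<^sup>2 / ((B+1) - (-B-1))\<^sup>2)"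
        unfolding A_def using H.Hoeffding_ineq_abs_ge'[of e, OF _ _ ne] e B0 by simp
      also have "\<dots> = 2 * exp (real (Suc n) * (-c))" by (simp add: c_def field_simps) (simp add: minus_divide_left algebra_simps)
      also have "\<dots> = 2 * exp (-c) ^ Suc n" by (simp only: exp_of_nat_mult)
      finally show ?thesis .
    qed
    have sm: "summable (\<lambda>n. 2 * exp (-c) ^ Suc n)"
      using c by (intro summable_mult summable_Suc_iff[THEN iffD2] summable_geometric) auto
    have "summable (\<lambda>n. measure M (A n))"
      using Pb by (intro summable_comparison_test'[OF sm, of 0]) simp
    moreover have "A n \<in> sets M" for n unfolding A_def by measurable
    ultimately have "AE \<omega> in M. eventually (\<lambda>n. \<omega> \<in> space M - A n) sequentially"
      by (intro borel_cantelli_AE1) (auto simp: emeasure_eq_measure)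
    then show ?thesis
    proof eventually_elim
      case (elim \<omega>)
      then show ?case by (rule eventually_mono) (auto simp: A_def)
    qed
  qed
  have "AE \<omega> in M. \<forall>k. eventually (\<lambda>n. \<bar>(\<Sum>i<Suc n. Z i \<omega>) / real (Suc n) - \<mu>\<bar> < 1 / real (Suc k)) sequentially"
    unfolding AE_all_countable by (intro allI key) auto
  then show ?thesis
  proof eventually_elim
    case (elim \<omega>)
    have "(\<lambda>n. (\<Sum>i<Suc n. Z i \<omega>) / real (Suc n)) \<longlonglongrightarrow> \<mu>"
    proof (rule LIMSEQ_I)
      fix r :: real assume "r > 0"
      then obtain k where k: "1 / real (Suc k) < r" using nat_approx_posE by blast
      from elim[rule_format, of k] obtain N where N:
        "\<And>n. n \<ge> N \<Longrightarrow> \<bar>(\<Sum>i<Suc n. Z i \<omega>) / real (Suc n) - \<mu>\<bar> < 1 / real (Suc k)"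
        unfolding eventually_sequentially by blast
      then show "\<exists>no. \<forall>n\<ge>no. norm ((\<Sum>i<Suc n. Z i \<omega>) / real (Suc n) - \<mu>) < r"
      proof (intro exI allI impI)
        fix n assume "n \<ge> N"
        then show "norm ((\<Sum>i<Suc n. Z i \<omega>) / real (Suc n) - \<mu>) < r"
          using N[of n] k by simp
      qed
    qed
    then show ?case unfolding \<mu>_def[symmetric] by (rule LIMSEQ_imp_Suc)
  qed
qed



lemma spatial_sign_sgn: "spatial_sign = sgn"
  by (rule ext) (simp add: spatial_sign_def sgn_div_norm)

lemma spatial_sign_measurable[measurable]: "spatial_sign \<in> borel_measurable borel"
  unfolding spatial_sign_sgn by measurable

lemma norm_spatial_sign_le: "norm (spatial_sign x) \<le> 1"
  unfolding spatial_sign_sgn by (simp add: norm_sgn)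

lemma spatial_sign_diff_le2: "norm (spatial_sign a - spatial_sign b) \<le> 2"
proof -
  have "norm (spatial_sign a - spatial_sign b) \<le> norm (spatial_sign a) + norm (spatial_sign b)"
    by (rule norm_triangle_ineq4)
  also have "\<dots> \<le> 2" using norm_spatial_sign_le[of a] norm_spatial_sign_le[of b] by simp
  finally show ?thesis .
qed

lemma spatial_sign_diff_le:
  fixes a b :: "real^'p"
  assumes "b \<noteq> 0"
  shows "norm (spatial_sign a - spatial_sign b) \<le> 2 * norm (a - b) / norm b"
proof (cases "a = 0")
  case True
  then show ?thesis using assms by (simp add: spatial_sign_def)
next
  case False
  have nb: "norm b > 0" using assms by simp
  have na: "norm a > 0" using False by simp
  define v1 where "v1 = ((norm b - norm a) / (norm a * norm b)) *\<^sub>R a"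
  define v2 where "v2 = (a - b) /\<^sub>R norm b"
  have e1: "a /\<^sub>R norm a - a /\<^sub>R norm b = v1"
  proof -
    have "(norm b - norm a) / (norm a * norm b) = inverse (norm a) - inverse (norm b)"
      using na nb by (simp add: field_simps)
    then show ?thesis unfolding v1_def by (simp add: scaleR_diff_left)
  qed
  have "spatial_sign a - spatial_sign b = (a /\<^sub>R norm a - a /\<^sub>R norm b) + v2"
    using False assms unfolding v2_def by (simp add: spatial_sign_def scaleR_diff_right)
  then have eq: "spatial_sign a - spatial_sign b = v1 + v2" by (simp add: e1)
  have "norm (spatial_sign a - spatial_sign b) \<le> norm v1 + norm v2"
    unfolding eq by (rule norm_triangle_ineq)
  moreover have "norm v1 = \<bar>norm b - norm a\<bar> / norm b"
    using na nb unfolding v1_def by (simp add: abs_mult field_simps)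
  moreover have "\<bar>norm b - norm a\<bar> \<le> norm (a - b)"
    using norm_triangle_ineq3[of b a] by (simp add: norm_minus_commute)
  moreover have "norm v2 = norm (a - b) / norm b"
    unfolding v2_def by (simp add: divide_inverse mult.commute)
  ultimately have "norm (spatial_sign a - spatial_sign b) \<le> norm (a - b) / norm b + norm (a - b) / norm b"
    using nb by (smt (verit, ccfv_SIG) divide_right_mono)
  then show ?thesis by simp
qed

lemma prod_entry_le:
  fixes a b :: "real^'p"
  assumes "norm a \<le> 1" "norm b \<le> 1"
  shows "\<bar>a$i * a$j - b$i * b$j\<bar> \<le> 2 * norm (a - b)"
proof -
  have "a$i * a$j - b$i * b$j = a$i * (a$j - b$j) + b$j * (a$i - b$i)" by algebra
  hence "\<bar>a$i * a$j - b$i * b$j\<bar> \<le> \<bar>a$i\<bar> * \<bar>a$j - b$j\<bar> + \<bar>b$j\<bar> * \<bar>a$i - b$i\<bar>"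
    by (simp add: abs_mult[symmetric] abs_triangle_ineq)
  also have "\<dots> \<le> 1 * norm (a - b) + 1 * norm (a - b)"
    using assms component_le_norm_cart[of a i] component_le_norm_cart[of b j]
      component_le_norm_cart[of "a - b" i] component_le_norm_cart[of "a - b" j]
    by (intro add_mono mult_mono) auto
  finally show ?thesis by simp
qed

lemma norm_le_sum_norm_vec: "norm (x :: 'a::real_normed_vector^'n) \<le> (\<Sum>i\<in>UNIV. norm (x$i))"
  by (simp add: norm_vec_def L2_set_le_sum)

lemma norm_mat_le: "norm (A :: real^'n^'m) \<le> (\<Sum>i\<in>UNIV. \<Sum>j\<in>UNIV. \<bar>A$i$j\<bar>)"
proof -
  have "norm A \<le> (\<Sum>i\<in>UNIV. norm (A$i))" by (rule norm_le_sum_norm_vec)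
  also have "\<dots> \<le> (\<Sum>i\<in>UNIV. \<Sum>j\<in>UNIV. \<bar>A$i$j\<bar>)"
    by (intro sum_mono norm_le_l1_cart)
  finally show ?thesis .
qed

lemma outer_measurable[measurable]: "(\<lambda>v. outer v v :: real^'p^'p) \<in> borel_measurable borel"
  unfolding outer_def by (intro borel_measurable_continuous_onI continuous_intros)

lemma vec_nth_measurable[measurable (raw)]:
  fixes f :: "'a \<Rightarrow> real^'p"
  assumes "f \<in> borel_measurable M"
  shows "(\<lambda>x. f x $ i) \<in> borel_measurable M"
proof -
  have "(\<lambda>v::real^'p. v $ i) \<in> borel_measurable borel"
    by (intro borel_measurable_continuous_onI continuous_intros)
  from measurable_compose[OF assms this] show ?thesis by simp
qed

lemma outer_nth[simp]: "outer v w $ i $ j = v$i * w$j"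
  by (simp add: outer_def)

lemma tend0:
  fixes f :: "nat \<Rightarrow> real"
  assumes "\<And>\<eta>. \<eta> > 0 \<Longrightarrow> eventually (\<lambda>n. f n \<le> \<eta>) sequentially" "\<And>n. f n \<ge> 0"
  shows "f \<longlonglongrightarrow> 0"
proof (rule order_tendstoI)
  fix y :: real assume "y < 0" then show "eventually (\<lambda>n. y < f n) sequentially"
  proof (intro always_eventually allI)
    fix n show "y < f n" using \<open>y < 0\<close> assms(2)[of n] by linarith
  qed
next
  fix y :: real assume "0 < y" then show "eventually (\<lambda>n. f n < y) sequentially"
    using assms(1)[of "y/2"] by (auto elim!: eventually_mono)
qed



lemma slln_compose:
  fixes M :: "'a measure" and X :: "nat \<Rightarrow> 'a \<Rightarrow> 'b::topological_space" and g :: "'b \<Rightarrow> real"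
  assumes P: "prob_space M" and ind: "prob_space.indep_vars M (\<lambda>_. borel) X UNIV"
    and dX: "\<And>i. distr M borel (X i) = F"
    and gm: "g \<in> borel_measurable borel"
    and bd: "\<And>x. \<bar>g x\<bar> \<le> B"
  shows "AE \<omega> in M. (\<lambda>n. (\<Sum>i<n. g (X i \<omega>)) / real n) \<longlonglongrightarrow> (\<integral>x. g x \<partial>F)"
proof -
  interpret prob_space M by (rule P)
  have Xm[measurable]: "\<And>i. X i \<in> borel_measurable M"
    using ind unfolding indep_vars_def by blast
  have ind2: "indep_vars (\<lambda>_. borel) (\<lambda>i \<omega>. g (X i \<omega>)) UNIV"
    by (rule indep_vars_compose2[OF ind]) (use gm in simp)
  have d: "distr M borel (\<lambda>\<omega>. g (X i \<omega>)) = distr F borel g" for i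
  proof -
    have "distr M borel (\<lambda>\<omega>. g (X i \<omega>)) = distr (distr M borel (X i)) borel g"
      using distr_distr[of g borel borel "X i" M] gm by (simp add: comp_def)
    then show ?thesis by (simp add: dX)
  qed
  have e: "expectation (\<lambda>\<omega>. g (X 0 \<omega>)) = (\<integral>x. g x \<partial>F)"
    using integral_distr[of "X 0" M borel g] gm by (simp add: dX)
  have "AE \<omega> in M. (\<lambda>n. (\<Sum>i<n. g (X i \<omega>)) / real n) \<longlonglongrightarrow> expectation (\<lambda>\<omega>. g (X 0 \<omega>))"
    by (rule slln_bounded[OF P ind2, of B]) (simp_all add: d bd)
  then show ?thesis by (simp add: e)
qed

lemma as_prob:
  fixes M :: "'a measure" and Y :: "nat \<Rightarrow> 'a \<Rightarrow> real"
  assumes P: "prob_space M" and Ym[measurable]: "\<And>n. Y n \<in> borel_measurable M"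
    and lim: "AE \<omega> in M. (\<lambda>n. Y n \<omega>) \<longlonglongrightarrow> 0" and e: "e > 0"
  shows "(\<lambda>n. measure M {\<omega> \<in> space M. e \<le> \<bar>Y n \<omega>\<bar>}) \<longlonglongrightarrow> 0"
proof -
  interpret prob_space M by (rule P)
  define A where "A n = {\<omega> \<in> space M. e \<le> \<bar>Y n \<omega>\<bar>}" for n
  have Am[measurable]: "A n \<in> sets M" for n unfolding A_def by measurable
  have "(\<lambda>n. integral\<^sup>L M (indicator (A n) :: 'a \<Rightarrow> real)) \<longlonglongrightarrow> integral\<^sup>L M (\<lambda>_. 0 :: real)"
  proof (rule integral_dominated_convergence[where w="\<lambda>_. 1"])
    show "AE x in M. (\<lambda>n. indicator (A n) x :: real) \<longlonglongrightarrow> 0"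
      using lim
    proof eventually_elim
      case (elim x)
      have "eventually (\<lambda>n. \<bar>Y n x\<bar> < e) sequentially"
        using order_tendstoD(2)[OF tendsto_rabs[OF elim] ] e by simp
      then have "eventually (\<lambda>n. indicator (A n) x = (0::real)) sequentially"
        by (rule eventually_mono) (auto simp: A_def)
      then show ?case by (rule tendsto_eventually)
    qed
  qed (auto simp: indicator_def)
  then show ?thesis by (simp add: A_def[symmetric])
qed



theorem theorem1:
  fixes M :: "'a measure"
    and F :: "(real^'p) measure"
    and X :: "nat \<Rightarrow> 'a \<Rightarrow> real^'p"
    and t :: "real^'p"
    and \<alpha> :: real
    and tn :: "nat \<Rightarrow> 'a \<Rightarrow> real^'p"
    and T :: "nat \<Rightarrow> 'a \<Rightarrow> real"
  assumes p2: "CARD('p) \<ge> 2"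
    and prob: "prob_space M"
    and indep: "prob_space.indep_vars M (\<lambda>_. borel) X UNIV"
    and distF: "\<And>i. distr M borel (X i) = F"
    and alpha: "\<alpha> \<ge> 0"
    and condI: "(\<integral>\<^sup>+ x. (if x = t then \<infinity> else ennreal (norm (x - t) powr (- 1 / (1 + \<alpha>)))) \<partial>F) < \<infinity>"
    and tn_meas: "\<And>n. tn n \<in> borel_measurable M"
  shows
    "((\<forall>n. T n \<in> borel_measurable M)
       \<and> (AE \<omega> in M. \<forall>n. real n powr \<alpha> * norm (tn n \<omega> - t) \<le> T n \<omega>)
       \<and> (if \<alpha> > 0 then (AE \<omega> in M. convergent (\<lambda>n. T n \<omega>))
          else (AE \<omega> in M. (\<lambda>n. T n \<omega>) \<longlonglongrightarrow> 0))
       \<longrightarrow> (AE \<omega> in M. (\<lambda>n. SSCM_n (\<lambda>i. X i \<omega>) n (tn n \<omega>)) \<longlonglongrightarrow> SSCM F t))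
     \<and>
     ((if \<alpha> > 0 then bounded_in_prob M (\<lambda>n \<omega>. real n powr \<alpha> * norm (tn n \<omega> - t))
       else conv_in_prob M (\<lambda>n \<omega>. real n powr \<alpha> * norm (tn n \<omega> - t)) (\<lambda>_. 0))
       \<longrightarrow> conv_in_prob M (\<lambda>n \<omega>. SSCM_n (\<lambda>i. X i \<omega>) n (tn n \<omega>)) (\<lambda>_. SSCM F t))"
proof -
  interpret prob_space M by (rule prob)
  have Xm[measurable]: "\<And>i. X i \<in> borel_measurable M"
    using indep unfolding indep_vars_def by blast
  have tnm[measurable]: "\<And>n. tn n \<in> borel_measurable M" by (rule tn_meas)
  have sF: "sets F = sets borel" using distF[of 0] by (metis sets_distr)
  have probF: "prob_space F" using prob_space_distr[OF Xm[of 0]] distF[of 0] by simp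
  interpret F: prob_space F by (rule probF)
  have Ft: "emeasure F {t} = 0"
  proof (rule ccontr)
    assume ne: "emeasure F {t} \<noteq> 0"
    have tF: "{t} \<in> sets F" using sF by simp
    have "(\<integral>\<^sup>+ x. \<infinity> * indicator {t} x \<partial>F) \<le>
        (\<integral>\<^sup>+ x. (if x = t then \<infinity> else ennreal (norm (x - t) powr (- 1 / (1 + \<alpha>)))) \<partial>F)"
      by (intro nn_integral_mono) (auto simp: indicator_def)
    also have "(\<integral>\<^sup>+ x. \<infinity> * indicator {t} x \<partial>F) = \<infinity> * emeasure F {t}"
      using tF by (rule nn_integral_cmult_indicator)
    also have "\<infinity> * emeasure F {t} = \<infinity>" using ne by (simp add: ennreal_mult_eq_top_iff)
    finally show False using condI by simp
  qed
  define s where "s u x = spatial_sign (x - u)" for u x :: "real^'p"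
  define f where "f u i j x = s u x $ i * s u x $ j" for u x :: "real^'p" and i j
  define h where "h k x = (if x = t then 4 else min 4 (4 / real (Suc k) / norm (x - t)))" for k :: nat and x
  define \<mu> where "\<mu> i j = SSCM F t $ i $ j" for i j
  define avg where "avg g \<omega> n = (\<Sum>m<n. g (X m \<omega>)) / real n" for g :: "real^'p \<Rightarrow> real" and \<omega> n
  define G where "G n \<omega> = (\<Sum>i\<in>UNIV. \<Sum>j\<in>UNIV. \<bar>avg (f t i j) \<omega> n - \<mu> i j\<bar>)" for n \<omega>
  define c where "c = (\<lambda>k. (\<integral>x. h k x \<partial>F))"
  define CC where "CC = real CARD('p) * real CARD('p)"
  have fm[measurable]: "f u i j \<in> borel_measurable borel" for u i j
    unfolding f_def s_def by measurable
  have hm[measurable]: "h k \<in> borel_measurable borel" for k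
    unfolding h_def by measurable
  have fb: "\<bar>f u i j x\<bar> \<le> 1" for u i j x
  proof -
    have "\<bar>s u x $ i\<bar> \<le> 1" "\<bar>s u x $ j\<bar> \<le> 1"
      unfolding s_def using component_le_norm_cart norm_spatial_sign_le order_trans by blast+
    then show ?thesis unfolding f_def abs_mult by (simp add: mult_le_one)
  qed
  have h0: "0 \<le> h k x" for k x unfolding h_def by auto
  have hb: "\<bar>h k x\<bar> \<le> 4" for k x unfolding h_def using h0 by auto
  have hpt: "\<bar>f u i j x - f t i j x\<bar> \<le> h k x" if u: "norm (u - t) \<le> 1 / real (Suc k)" for u i j x k
  proof -
    have 1: "\<bar>f u i j x - f t i j x\<bar> \<le> 2 * norm (s u x - s t x)"
      unfolding f_def s_def by (intro prod_entry_le norm_spatial_sign_le)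
    have 2: "norm (s u x - s t x) \<le> 2" unfolding s_def by (rule spatial_sign_diff_le2)
    show ?thesis
    proof (cases "x = t")
      case True
      then show ?thesis using 1 2 by (simp add: h_def)
    next
      case False
      have "norm (s u x - s t x) \<le> 2 * norm ((x - u) - (x - t)) / norm (x - t)"
        unfolding s_def using False by (intro spatial_sign_diff_le) simp
      also have "norm ((x - u) - (x - t)) = norm (u - t)" by (simp add: norm_minus_commute)
      also have "2 * norm (u - t) / norm (x - t) \<le> 2 * (1 / real (Suc k)) / norm (x - t)"
        using u by (intro divide_right_mono) auto
      finally have "2 * norm (s u x - s t x) \<le> 4 / real (Suc k) / norm (x - t)"
        by (simp add: field_simps)
      then show ?thesis using 1 2 False by (simp add: h_def)
    qed
  qed
  have outer_bd: "norm (outer (s t x) (s t x)) \<le> CC" for x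
  proof -
    have "norm (outer (s t x) (s t x)) \<le> (\<Sum>i\<in>UNIV. \<Sum>j\<in>UNIV. \<bar>outer (s t x) (s t x) $ i $ j\<bar>)"
      by (rule norm_mat_le)
    also have "\<dots> \<le> (\<Sum>i\<in>(UNIV::'p set). \<Sum>j\<in>(UNIV::'p set). 1)"
      using fb[of t] unfolding f_def by (intro sum_mono) simp
    finally show ?thesis by (simp add: CC_def)
  qed
  have om: "(\<lambda>x. outer (s t x) (s t x)) \<in> borel_measurable F"
    unfolding s_def measurable_cong_sets[OF sF refl] by measurable
  have oint: "integrable F (\<lambda>x. outer (s t x) (s t x))"
    by (rule F.integrable_const_bound[of _ CC]) (use outer_bd om in auto)
  have \<mu>_eq: "\<mu> i j = (\<integral>x. f t i j x \<partial>F)" for i j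
  proof -
    have bl: "bounded_linear (\<lambda>A::real^'p^'p. A $ i $ j)"
      by (rule bounded_linear_compose[OF bounded_linear_vec_nth bounded_linear_vec_nth])
    have "(\<integral>x. f t i j x \<partial>F) = (\<integral>x. outer (s t x) (s t x) $ i $ j \<partial>F)"
      by (simp add: f_def)
    also have "\<dots> = (\<integral>x. outer (s t x) (s t x) \<partial>F) $ i $ j"
      by (rule integral_bounded_linear[OF bl oint])
    finally show ?thesis by (simp add: \<mu>_def SSCM_def s_def)
  qed
  have AE1: "AE \<omega> in M. \<forall>i\<in>UNIV. \<forall>j\<in>UNIV. (\<lambda>n. avg (f t i j) \<omega> n) \<longlonglongrightarrow> \<mu> i j"
  proof (intro AE_finite_allI)
    fix i j :: 'p
    show "AE \<omega> in M. (\<lambda>n. avg (f t i j) \<omega> n) \<longlonglongrightarrow> \<mu> i j"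
      unfolding avg_def \<mu>_eq by (rule slln_compose[OF prob indep distF fm fb])
  qed simp_all
  have AEG: "AE \<omega> in M. (\<lambda>n. G n \<omega>) \<longlonglongrightarrow> 0"
    using AE1
  proof eventually_elim
    case (elim \<omega>)
    have "(\<lambda>n. G n \<omega>) \<longlonglongrightarrow> (\<Sum>i\<in>UNIV. \<Sum>j\<in>UNIV. \<bar>\<mu> i j - \<mu> i j\<bar>)"
      unfolding G_def using elim by (intro tendsto_sum tendsto_rabs tendsto_diff tendsto_const) auto
    then show ?case by simp
  qed
  have AE2: "AE \<omega> in M. \<forall>k. (\<lambda>n. avg (h k) \<omega> n) \<longlonglongrightarrow> c k"
    unfolding AE_all_countable avg_def c_def
    by (intro allI slln_compose[OF prob indep distF hm hb])
  have c0: "c \<longlonglongrightarrow> 0"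
  proof -
    have "(\<lambda>k. \<integral>x. h k x \<partial>F) \<longlonglongrightarrow> (\<integral>x. 0 \<partial>F)"
    proof (rule integral_dominated_convergence[where w="\<lambda>_. 4"])
      have "AE x in F. x \<noteq> t"
        by (rule AE_I[where N="{t}"]) (use Ft sF in auto)
      then show "AE x in F. (\<lambda>k. h k x) \<longlonglongrightarrow> 0"
      proof eventually_elim
        case (elim x)
        have nx: "norm (x - t) > 0" using elim by simp
        have l: "(\<lambda>k. 4 / real k) \<longlonglongrightarrow> 0" by (rule lim_const_over_n)
        have "(\<lambda>k. 4 / real (Suc k) / norm (x - t)) \<longlonglongrightarrow> 0 / norm (x - t)"
          by (intro tendsto_divide LIMSEQ_Suc[OF l] tendsto_const) (use nx in simp)
        then have u: "(\<lambda>k. 4 / real (Suc k) / norm (x - t)) \<longlonglongrightarrow> 0" by simp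
        show ?case
          by (rule tendsto_sandwich[OF _ _ tendsto_const u]) (use h0 elim in \<open>auto simp: h_def\<close>)
      qed
    next
      show "\<And>k. AE x in F. norm (h k x) \<le> 4" using hb by simp
    qed (use sF in \<open>auto simp: measurable_cong_sets[OF sF refl]\<close>)
    then show ?thesis unfolding c_def by simp
  qed
  have key: "dist (SSCM_n (\<lambda>i. X i \<omega>) n (tn n \<omega>)) (SSCM F t) \<le> G n \<omega> + CC * avg (h k) \<omega> n"
    if u: "norm (tn n \<omega> - t) \<le> 1 / real (Suc k)" for \<omega> n k
  proof -
    define A where "A = SSCM_n (\<lambda>i. X i \<omega>) n (tn n \<omega>)"
    have Aij: "A $ i $ j = avg (f (tn n \<omega>) i j) \<omega> n" for i j
      by (simp add: A_def SSCM_n_def avg_def f_def s_def)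
    have Sij: "SSCM F t $ i $ j = \<mu> i j" for i j by (simp add: \<mu>_def)
    have d1: "\<bar>avg (f (tn n \<omega>) i j) \<omega> n - avg (f t i j) \<omega> n\<bar> \<le> avg (h k) \<omega> n" for i j
    proof -
      have "avg (f (tn n \<omega>) i j) \<omega> n - avg (f t i j) \<omega> n =
          (\<Sum>m<n. f (tn n \<omega>) i j (X m \<omega>) - f t i j (X m \<omega>)) / real n"
        by (simp add: avg_def sum_subtractf diff_divide_distrib)
      also have "\<bar>\<dots>\<bar> = \<bar>\<Sum>m<n. f (tn n \<omega>) i j (X m \<omega>) - f t i j (X m \<omega>)\<bar> / real n"
        by simp
      also have "\<dots> \<le> (\<Sum>m<n. h k (X m \<omega>)) / real n"
        by (intro divide_right_mono order.trans[OF sum_abs] sum_mono hpt u) simp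
      finally show ?thesis by (simp add: avg_def)
    qed
    have "dist A (SSCM F t) \<le> (\<Sum>i\<in>UNIV. \<Sum>j\<in>UNIV. \<bar>(A - SSCM F t) $ i $ j\<bar>)"
      unfolding dist_norm by (rule norm_mat_le)
    also have "\<dots> \<le> (\<Sum>i\<in>UNIV. \<Sum>j\<in>UNIV. avg (h k) \<omega> n + \<bar>avg (f t i j) \<omega> n - \<mu> i j\<bar>)"
    proof (intro sum_mono)
      fix i j
      show "\<bar>(A - SSCM F t) $ i $ j\<bar> \<le> avg (h k) \<omega> n + \<bar>avg (f t i j) \<omega> n - \<mu> i j\<bar>"
        using d1[of i j] unfolding Aij Sij vector_minus_component by linarith
    qed
    also have "\<dots> = CC * avg (h k) \<omega> n + G n \<omega>"
      by (simp add: G_def CC_def sum.distrib)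
    finally show ?thesis by (simp add: A_def)
  qed
  have CCc: "(\<lambda>k. CC * c k) \<longlonglongrightarrow> 0"
    using tendsto_mult[OF tendsto_const[of CC] c0] by simp
  have CC0: "CC \<ge> 0" by (simp add: CC_def)
  have Gnn: "G n \<omega> \<ge> 0" for n \<omega> unfolding G_def by (intro sum_nonneg) auto
  have avgnn: "avg (h k) \<omega> n \<ge> 0" for k \<omega> n unfolding avg_def using h0 by (simp add: sum_nonneg)
  have conv_det: "(\<lambda>n. dist (SSCM_n (\<lambda>i. X i \<omega>) n (tn n \<omega>)) (SSCM F t)) \<longlonglongrightarrow> 0"
    if G\<omega>: "(\<lambda>n. G n \<omega>) \<longlonglongrightarrow> 0" and h\<omega>: "\<forall>k. (\<lambda>n. avg (h k) \<omega> n) \<longlonglongrightarrow> c k"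
      and \<delta>\<omega>: "(\<lambda>n. norm (tn n \<omega> - t)) \<longlonglongrightarrow> 0" for \<omega>
  proof (rule tend0)
    fix \<eta> :: real assume \<eta>: "\<eta> > 0"
    have \<eta>3: "\<eta>/3 > 0" using \<eta> by simp
    have "eventually (\<lambda>k. CC * c k < \<eta>/3) sequentially"
      using order_tendstoD(2)[OF CCc \<eta>3] by simp
    then obtain k where k: "CC * c k < \<eta>/3" by (auto simp: eventually_sequentially)
    have e1: "eventually (\<lambda>n. G n \<omega> < \<eta>/3) sequentially"
      using order_tendstoD(2)[OF G\<omega> \<eta>3] by simp
    have "(\<lambda>n. CC * avg (h k) \<omega> n) \<longlonglongrightarrow> CC * c k"
      using h\<omega> by (intro tendsto_mult tendsto_const) auto
    then have e2: "eventually (\<lambda>n. CC * avg (h k) \<omega> n < 2*\<eta>/3) sequentially"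
      using k \<eta> by (intro order_tendstoD(2)) auto
    have e3: "eventually (\<lambda>n. norm (tn n \<omega> - t) < 1 / real (Suc k)) sequentially"
      using order_tendstoD(2)[OF \<delta>\<omega>] by simp
    show "eventually (\<lambda>n. dist (SSCM_n (\<lambda>i. X i \<omega>) n (tn n \<omega>)) (SSCM F t) \<le> \<eta>) sequentially"
      using e1 e2 e3
    proof eventually_elim
      case (elim n)
      have "dist (SSCM_n (\<lambda>i. X i \<omega>) n (tn n \<omega>)) (SSCM F t) \<le> G n \<omega> + CC * avg (h k) \<omega> n"
        using elim by (intro key) simp
      then show ?case using elim by simp
    qed
  qed simp
  have powr_neg: "(\<lambda>n. real n powr (-\<alpha>)) \<longlonglongrightarrow> 0" if "\<alpha> > 0"
    using tendsto_neg_powr[of "-\<alpha>" real sequentially] filterlim_real_sequentially that by simp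
  show ?thesis
  proof (intro conjI impI)
    assume H: "(\<forall>n. T n \<in> borel_measurable M)
       \<and> (AE \<omega> in M. \<forall>n. real n powr \<alpha> * norm (tn n \<omega> - t) \<le> T n \<omega>)
       \<and> (if \<alpha> > 0 then (AE \<omega> in M. convergent (\<lambda>n. T n \<omega>))
          else (AE \<omega> in M. (\<lambda>n. T n \<omega>) \<longlonglongrightarrow> 0))"
    have ineq: "AE \<omega> in M. \<forall>n. real n powr \<alpha> * norm (tn n \<omega> - t) \<le> T n \<omega>" using H by blast
    have \<delta>AE: "AE \<omega> in M. (\<lambda>n. norm (tn n \<omega> - t)) \<longlonglongrightarrow> 0"
    proof (cases "\<alpha> > 0")
      case True
      with H have "AE \<omega> in M. convergent (\<lambda>n. T n \<omega>)" by simp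
      with ineq show ?thesis
      proof eventually_elim
        case (elim \<omega>)
        note om = elim
        obtain C where C: "C > 0" "\<And>n. norm (T n \<omega>) \<le> C"
          using BseqE[OF convergent_imp_Bseq[OF elim(2)]] by metis
        have ub: "(\<lambda>n. C * real n powr (-\<alpha>)) \<longlonglongrightarrow> 0"
          using tendsto_mult[OF tendsto_const[of C] powr_neg[OF True]] by simp
        show ?case
        proof (rule tendsto_sandwich[OF _ _ tendsto_const ub])
          show "eventually (\<lambda>n. norm (tn n \<omega> - t) \<le> C * real n powr (-\<alpha>)) sequentially"
            using eventually_ge_at_top[of "1::nat"]
          proof eventually_elim
            case (elim n)
            have pos: "real n powr \<alpha> > 0" using elim by simp
            have "real n powr \<alpha> * norm (tn n \<omega> - t) \<le> C"
              using om(1)[rule_format, of n] C(2)[of n] by simp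
            then have "norm (tn n \<omega> - t) \<le> C / real n powr \<alpha>"
              using pos by (simp add: field_simps)
            then show ?case by (simp add: powr_minus_divide)
          qed
        qed simp
      qed
    next
      case False
      then have a0: "\<alpha> = 0" using alpha by simp
      from False H have "AE \<omega> in M. (\<lambda>n. T n \<omega>) \<longlonglongrightarrow> 0" by simp
      with ineq show ?thesis
      proof eventually_elim
        case (elim \<omega>)
        note om = elim
        show ?case
        proof (rule tendsto_sandwich[OF _ _ tendsto_const elim(2)])
          show "eventually (\<lambda>n. norm (tn n \<omega> - t) \<le> T n \<omega>) sequentially"
            using eventually_ge_at_top[of "1::nat"]
          proof eventually_elim
            case (elim n)
            then show ?case using om(1)[rule_format, of n] a0 by simp
          qed
        qed simp
      qed
    qed
    show "AE \<omega> in M. (\<lambda>n. SSCM_n (\<lambda>i. X i \<omega>) n (tn n \<omega>)) \<longlonglongrightarrow> SSCM F t"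
      using AEG AE2 \<delta>AE
    proof eventually_elim
      case (elim \<omega>)
      then show ?case by (subst tendsto_dist_iff) (rule conv_det)
    qed
  next
    assume H2: "if \<alpha> > 0 then bounded_in_prob M (\<lambda>n \<omega>. real n powr \<alpha> * norm (tn n \<omega> - t))
       else conv_in_prob M (\<lambda>n \<omega>. real n powr \<alpha> * norm (tn n \<omega> - t)) (\<lambda>_. 0)"
    have P\<delta>: "(\<lambda>n. measure M {\<omega>\<in>space M. \<epsilon> < norm (tn n \<omega> - t)}) \<longlonglongrightarrow> 0" if \<epsilon>: "\<epsilon> > 0" for \<epsilon>
    proof (cases "\<alpha> > 0")
      case True
      with H2 have bip: "bounded_in_prob M (\<lambda>n \<omega>. real n powr \<alpha> * norm (tn n \<omega> - t))" by simp
      show ?thesis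
      proof (rule tend0)
        fix \<eta> :: real assume \<eta>: "\<eta> > 0"
        obtain K where K: "\<And>n. measure M {\<omega> \<in> space M. \<bar>real n powr \<alpha> * norm (tn n \<omega> - t)\<bar> > K} \<le> \<eta>"
          using bip \<eta> unfolding bounded_in_prob_def by blast
        have q: "\<epsilon> / (\<bar>K\<bar> + 1) > 0" using \<epsilon> by simp
        have "eventually (\<lambda>n. real n powr (-\<alpha>) < \<epsilon> / (\<bar>K\<bar> + 1)) sequentially"
          using order_tendstoD(2)[OF powr_neg[OF True] q] .
        then show "eventually (\<lambda>n. measure M {\<omega>\<in>space M. \<epsilon> < norm (tn n \<omega> - t)} \<le> \<eta>) sequentially"
          using eventually_ge_at_top[of "1::nat"]
        proof eventually_elim
          case (elim n)
          have pn: "real n powr \<alpha> > 0" using elim by simp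
          have inv: "real n powr (-\<alpha>) = 1 / real n powr \<alpha>" by (simp add: powr_minus_divide)
          have sub: "{\<omega>\<in>space M. \<epsilon> < norm (tn n \<omega> - t)} \<subseteq>
              {\<omega> \<in> space M. \<bar>real n powr \<alpha> * norm (tn n \<omega> - t)\<bar> > K}"
          proof safe
            fix \<omega> assume \<omega>: "\<omega> \<in> space M" "\<epsilon> < norm (tn n \<omega> - t)"
            have "1 / real n powr \<alpha> * (\<bar>K\<bar> + 1) < \<epsilon>"
              using elim(1) unfolding inv by (simp add: field_simps)
            then have "\<bar>K\<bar> + 1 < \<epsilon> * real n powr \<alpha>"
              using pn by (simp add: field_simps)
            also have "\<dots> \<le> norm (tn n \<omega> - t) * real n powr \<alpha>"
              using \<omega>(2) pn by (intro mult_right_mono) auto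
            finally show "K < \<bar>real n powr \<alpha> * norm (tn n \<omega> - t)\<bar>"
              using pn by (simp add: abs_mult mult.commute)
          qed
          have "measure M {\<omega>\<in>space M. \<epsilon> < norm (tn n \<omega> - t)} \<le>
              measure M {\<omega> \<in> space M. \<bar>real n powr \<alpha> * norm (tn n \<omega> - t)\<bar> > K}"
            by (rule finite_measure_mono[OF sub]) measurable
          then show ?case using K[of n] by simp
        qed
      qed simp
    next
      case False
      with H2 have cip: "conv_in_prob M (\<lambda>n \<omega>. real n powr \<alpha> * norm (tn n \<omega> - t)) (\<lambda>_. 0)" by simp
      have a0: "\<alpha> = 0" using False alpha by simp
      have l: "(\<lambda>n. measure M {\<omega> \<in> space M. dist (real n powr \<alpha> * norm (tn n \<omega> - t)) 0 > \<epsilon>}) \<longlonglongrightarrow> 0"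
        using cip \<epsilon> unfolding conv_in_prob_def by blast
      show ?thesis
      proof (rule tendsto_cong[THEN iffD1, OF _ l])
        show "eventually (\<lambda>n. measure M {\<omega> \<in> space M. dist (real n powr \<alpha> * norm (tn n \<omega> - t)) 0 > \<epsilon>} =
            measure M {\<omega>\<in>space M. \<epsilon> < norm (tn n \<omega> - t)}) sequentially"
          using eventually_ge_at_top[of "1::nat"]
          by eventually_elim (simp add: a0)
      qed
    qed
    have Gm[measurable]: "G n \<in> borel_measurable M" for n
      unfolding G_def avg_def by measurable
    have avgm[measurable]: "(\<lambda>\<omega>. avg (h k) \<omega> n) \<in> borel_measurable M" for k n
      unfolding avg_def by measurable
    show "conv_in_prob M (\<lambda>n \<omega>. SSCM_n (\<lambda>i. X i \<omega>) n (tn n \<omega>)) (\<lambda>_. SSCM F t)"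
      unfolding conv_in_prob_def
    proof (intro allI impI)
      fix r :: real assume r: "r > 0"
      have r3: "r/3 > 0" using r by simp
      have "eventually (\<lambda>k. CC * c k < r/3) sequentially"
        using order_tendstoD(2)[OF CCc r3] by simp
      then obtain k where k: "CC * c k < r/3" by (auto simp: eventually_sequentially)
      define E1 where "E1 n = {\<omega>\<in>space M. r/3 \<le> \<bar>G n \<omega>\<bar>}" for n
      define E2 where "E2 n = {\<omega>\<in>space M. 1 / real (Suc k) < norm (tn n \<omega> - t)}" for n
      define E3 where "E3 n = {\<omega>\<in>space M. r/3 \<le> \<bar>CC * avg (h k) \<omega> n - CC * c k\<bar>}" for n
      have E1m[measurable]: "E1 n \<in> sets M" for n unfolding E1_def by measurable
      have E2m[measurable]: "E2 n \<in> sets M" for n unfolding E2_def by measurable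
      have E3m[measurable]: "E3 n \<in> sets M" for n unfolding E3_def by measurable
      have L1: "(\<lambda>n. measure M (E1 n)) \<longlonglongrightarrow> 0"
        unfolding E1_def by (rule as_prob[OF prob Gm AEG r3])
      have L2: "(\<lambda>n. measure M (E2 n)) \<longlonglongrightarrow> 0"
        unfolding E2_def by (rule P\<delta>) simp
      have AE3: "AE \<omega> in M. (\<lambda>n. CC * avg (h k) \<omega> n - CC * c k) \<longlonglongrightarrow> 0"
        using AE2
      proof eventually_elim
        case (elim \<omega>)
        have "(\<lambda>n. CC * avg (h k) \<omega> n - CC * c k) \<longlonglongrightarrow> CC * c k - CC * c k"
          using elim by (intro tendsto_intros) auto
        then show ?case by simp
      qed
      have L3: "(\<lambda>n. measure M (E3 n)) \<longlonglongrightarrow> 0"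
        unfolding E3_def by (rule as_prob[OF prob _ AE3 r3]) measurable
      show "(\<lambda>n. measure M {\<omega> \<in> space M. r < dist (SSCM_n (\<lambda>i. X i \<omega>) n (tn n \<omega>)) (SSCM F t)}) \<longlonglongrightarrow> 0"
      proof (rule tend0)
        fix \<eta> :: real assume \<eta>: "\<eta> > 0"
        have \<eta>3: "\<eta>/3 > 0" using \<eta> by simp
        have e1: "eventually (\<lambda>n. measure M (E1 n) < \<eta>/3) sequentially"
          using order_tendstoD(2)[OF L1 \<eta>3] .
        have e2: "eventually (\<lambda>n. measure M (E2 n) < \<eta>/3) sequentially"
          using order_tendstoD(2)[OF L2 \<eta>3] .
        have e3: "eventually (\<lambda>n. measure M (E3 n) < \<eta>/3) sequentially"
          using order_tendstoD(2)[OF L3 \<eta>3] .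
        show "eventually (\<lambda>n. measure M {\<omega> \<in> space M. r < dist (SSCM_n (\<lambda>i. X i \<omega>) n (tn n \<omega>)) (SSCM F t)} \<le> \<eta>) sequentially"
          using e1 e2 e3
        proof eventually_elim
          case (elim n)
          have sub: "{\<omega> \<in> space M. r < dist (SSCM_n (\<lambda>i. X i \<omega>) n (tn n \<omega>)) (SSCM F t)} \<subseteq> (E1 n \<union> E2 n) \<union> E3 n"
          proof
            fix \<omega> assume \<omega>: "\<omega> \<in> {\<omega> \<in> space M. r < dist (SSCM_n (\<lambda>i. X i \<omega>) n (tn n \<omega>)) (SSCM F t)}"
            show "\<omega> \<in> (E1 n \<union> E2 n) \<union> E3 n"
            proof (rule ccontr)
              assume "\<omega> \<notin> (E1 n \<union> E2 n) \<union> E3 n"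
              then have n1: "G n \<omega> < r/3" and n2: "norm (tn n \<omega> - t) \<le> 1 / real (Suc k)"
                and n3: "\<bar>CC * avg (h k) \<omega> n - CC * c k\<bar> < r/3"
                using \<omega> Gnn[of n \<omega>] by (auto simp: E1_def E2_def E3_def)
              have "dist (SSCM_n (\<lambda>i. X i \<omega>) n (tn n \<omega>)) (SSCM F t) \<le> G n \<omega> + CC * avg (h k) \<omega> n"
                using n2 by (rule key)
              moreover have "CC * avg (h k) \<omega> n < CC * c k + r/3" using n3 by linarith
              ultimately show False using \<omega> n1 k by simp
            qed
          qed
          have "measure M {\<omega> \<in> space M. r < dist (SSCM_n (\<lambda>i. X i \<omega>) n (tn n \<omega>)) (SSCM F t)} \<le> measure M ((E1 n \<union> E2 n) \<union> E3 n)"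
            by (rule finite_measure_mono[OF sub]) measurable
          also have "\<dots> \<le> measure M (E1 n \<union> E2 n) + measure M (E3 n)"
            by (rule measure_Un_le) measurable
          also have "measure M (E1 n \<union> E2 n) \<le> measure M (E1 n) + measure M (E2 n)"
            by (rule measure_Un_le) measurable
          finally show ?case using elim by simp
        qed
      qed simp
    qed
  qed
qed


end
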